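(* Let $w$ be a weight function on the unit circle, normalized and with orthonormal polynomials $\phi_n$ as described in the context. Assume that $w$ is differentiable in a neighborhood of the unit circle, has moments of all integral orders, and that the integrals $$\int_{|\zeta|=1}\frac{v'(z)-v'(\zeta)}{z-\zeta}\,\zeta^m\,w(\zeta)\,\frac{d\zeta}{i\zeta}$$ exist for all integers $m$, where $v=-\log w$. Then for every $n\ge 1$, $$\phi_n'(z)=n\frac{\kappa_{n-1}}{\kappa_n}\phi_{n-1}(z)-i\,\phi_n^*(z)\int_{|\zeta|=1}\frac{v'(z)-v'(\zeta)}{z-\zeta}\,\phi_n(\zeta)\overline{\phi_n^*(\zeta)}\,w(\zeta)\,d\zeta+i\,\phi_n(z)\int_{|\zeta|=1}\frac{v'(z)-v'(\zeta)}{z-\zeta}\,\phi_n(\zeta)\overline{\phi_n(\zeta)}\,w(\zeta)\,d\zeta .$$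
   Context: Let $w$ be a positive weight function on the unit circle normalized by $\int_{|\zeta|=1}w(\zeta)\frac{d\zeta}{i\zeta}=1$; all contour integrals over $|\zeta|=1$ are taken counterclockwise. Let $\phi_n(z)=\kappa_n z^n+\ell_n z^{n-1}+\cdots$, with $\kappa_n>0$, be the orthonormal polynomials: $\int_{|\zeta|=1}\phi_m(\zeta)\overline{\phi_n(\zeta)}w(\zeta)\frac{d\zeta}{i\zeta}=\delta_{m,n}$. The reciprocal polynomial of a degree-$n$ polynomial $f(z)=\sum_{k=0}^n a_kz^k$ is $f^*(z)=\sum_{k=0}^n\overline{a_k}z^{n-k}$. The external field is $v(z)$ defined by $w(z)=\exp(-v(z))$. *)

theory Defs
  imports "HOL-Complex_Analysis.Complex_Analysis" "HOL-Computational_Algebra.Polynomial"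
begin

definition recip_poly :: "nat \<Rightarrow> complex poly \<Rightarrow> complex poly" where
  "recip_poly n f = (\<Sum>k\<le>n. monom (cnj (coeff f k)) (n - k))"

end

theory Submission
  imports Defs
begin

lemma circ_inv: "norm (z::complex) = 1 \<Longrightarrow> cnj z = inverse z"
  by (metis complex_norm_square inverse_unique of_real_1 power_one)

lemma circ_mult_cnj: "norm (z::complex) = 1 \<Longrightarrow> z * cnj z = 1"
  by (metis complex_norm_square of_real_1 power_one)

lemma circ_param:
  "contour_integral (circlepath 0 1) (\<lambda>\<zeta>. F \<zeta> / (\<i> * \<zeta>))
   = integral {0..1} (\<lambda>t. 2 * of_real pi * F (circlepath 0 1 t))"
  unfolding contour_integral_integral
proof (rule integral_cong)
  fix t :: real
  have ne: "circlepath 0 1 t \<noteq> 0" by (simp add: circlepath)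
  show "F (circlepath 0 1 t) / (\<i> * circlepath 0 1 t) * vector_derivative (circlepath 0 1) (at t)
        = 2 * of_real pi * F (circlepath 0 1 t)"
  proof -
    have vd: "vector_derivative (circlepath 0 1) (at t) = 2 * of_real pi * \<i> * circlepath 0 1 t"
      using vector_derivative_circlepath[of 0 1 t] by (simp add: circlepath)
    show ?thesis unfolding vd using ne by (simp add: field_simps)
  qed
qed

lemma coeff_recip: "coeff (recip_poly n f) j = (if j \<le> n then cnj (coeff f (n - j)) else 0)"
proof -
  have "coeff (recip_poly n f) j = (\<Sum>k\<le>n. if n - k = j then cnj (coeff f k) else 0)"
    unfolding recip_poly_def by (simp add: coeff_sum coeff_monom)
  also have "\<dots> = (if j \<le> n then cnj (coeff f (n - j)) else 0)"
  proof (cases "j \<le> n")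
    case True
    have "(\<Sum>k\<le>n. if n - k = j then cnj (coeff f k) else 0) = (\<Sum>k\<le>n. if k = n - j then cnj (coeff f (n - j)) else 0)"
      by (intro sum.cong) (use True in auto)
    then show ?thesis using True by (simp add: sum.delta')
  next
    case False
    then show ?thesis by (intro trans[OF sum.neutral]) auto
  qed
  finally show ?thesis .
qed

lemma poly_sum_le: "degree (f::complex poly) \<le> n \<Longrightarrow> poly f x = (\<Sum>k\<le>n. coeff f k * x ^ k)"
  unfolding poly_altdef
  by (rule sum.mono_neutral_left) (auto simp: coeff_eq_0)

lemma poly_recip_circ:
  assumes "degree f \<le> n" "norm \<zeta> = 1"
  shows "poly (recip_poly n f) \<zeta> = \<zeta> ^ n * cnj (poly f \<zeta>)"
proof -
  have nz: "\<zeta> \<noteq> 0" using assms by auto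
  have inv: "cnj \<zeta> = inverse \<zeta>" using assms(2) by (rule circ_inv)
  have "poly (recip_poly n f) \<zeta> = (\<Sum>k\<le>n. cnj (coeff f k) * \<zeta> ^ (n - k))"
    unfolding recip_poly_def by (simp add: poly_sum poly_monom)
  also have "\<dots> = (\<Sum>k\<le>n. \<zeta> ^ n * (cnj (coeff f k) * cnj \<zeta> ^ k))"
  proof (intro sum.cong refl)
    fix k assume "k \<in> {..n}"
    then have "\<zeta> ^ n = \<zeta> ^ (n - k) * \<zeta> ^ k" by (simp add: power_add[symmetric])
    then show "cnj (coeff f k) * \<zeta> ^ (n - k) = \<zeta> ^ n * (cnj (coeff f k) * cnj \<zeta> ^ k)"
      using nz by (simp add: inv power_inverse field_simps)
  qed
  also have "\<dots> = \<zeta> ^ n * cnj (poly f \<zeta>)"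
    by (simp add: poly_sum_le[OF assms(1)] sum_distrib_left)
  finally show ?thesis .
qed

lemma poly_recip_0: "poly (recip_poly n f) 0 = cnj (coeff f n)"
  by (simp add: poly_0_coeff_0 coeff_recip)

lemma degree_recip: "degree (recip_poly n f) \<le> n"
  by (rule degree_le) (simp add: coeff_recip)

lemma recip_add: "recip_poly n (f + g) = recip_poly n f + recip_poly n g"
  by (rule poly_eqI) (simp add: coeff_recip)

lemma recip_smult: "recip_poly n (smult c f) = smult (cnj c) (recip_poly n f)"
  by (rule poly_eqI) (simp add: coeff_recip)

lemma recip_shift: "recip_poly (Suc n) (pCons 0 f) = recip_poly n f"
proof (rule poly_eqI)
  fix j
  show "coeff (recip_poly (Suc n) (pCons 0 f)) j = coeff (recip_poly n f) j"
  proof (cases "j \<le> n")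
    case True
    then have "Suc n - j = Suc (n - j)" by simp
    then show ?thesis using True by (simp add: coeff_recip)
  next
    case False
    then show ?thesis by (cases "j = Suc n") (auto simp: coeff_recip)
  qed
qed

lemma recip_recip:
  assumes "degree f \<le> n"
  shows "recip_poly (Suc n) (recip_poly n f) = pCons 0 f"
proof (rule poly_eqI)
  fix j
  show "coeff (recip_poly (Suc n) (recip_poly n f)) j = coeff (pCons 0 f) j"
  proof (cases j)
    case 0
    then show ?thesis by (simp add: coeff_recip)
  next
    case (Suc i)
    show ?thesis
    proof (cases "i \<le> n")
      case True
      then show ?thesis using Suc by (simp add: coeff_recip)
    next
      case False
      then show ?thesis using Suc assms by (simp add: coeff_recip coeff_eq_0)
    qed
  qed
qed

lemma cd_alg:
  fixes a b A1 A2 B1 B2 :: complex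
  shows "cnj (cnj a * B1 + cnj b * A1) * (cnj a * B2 + cnj b * A2) - cnj (a * A1 + b * B1) * (a * A2 + b * B2)
     = (a * cnj a - b * cnj b) * (cnj B1 * B2 - cnj A1 * A2)"
  by (simp add: algebra_simps)

lemma fder_alg:
  fixes a b c d e f \<zeta> :: complex
  assumes "\<zeta> \<noteq> 0"
  shows "(((a * b + c * d) * e + (- f * e) * (d * b)) * (\<i> * \<zeta>) - d * b * e * (\<i> * 1)) / ((\<i> * \<zeta>) * (\<i> * \<zeta>))
    = a * b * e / (\<i> * \<zeta>) + d * (c - b / \<zeta>) * e / (\<i> * \<zeta>) - d * b * f * e / (\<i> * \<zeta>)"
  using assms by (simp add: field_simps)

lemma p3_core:
  fixes p dz dw w Rz cR phz cph \<zeta> u :: complex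
  assumes "\<zeta> \<noteq> 0" "u \<noteq> 0"
  shows "p * (\<zeta> * (Rz * cR - phz * cph) / u) * dw * w / (\<i> * \<zeta>)
    = dz * (p * (\<zeta> * (Rz * cR - phz * cph) / u) * w / (\<i> * \<zeta>))
      + (- \<i> * Rz) * ((dz - dw) / (- u) * p * cR * w)
      + (\<i> * phz) * ((dz - dw) / (- u) * p * cph * w)"
proof -
  have ii: "x / (\<i> * \<zeta>) = - \<i> * x / \<zeta>" for x
    using assms(1) by (simp add: field_simps)
  show ?thesis unfolding ii using assms by (simp add: field_simps)
qed

lemma p3_alg:
  fixes p dz dw w Rz cR phz cph \<zeta> z :: complex
  assumes "\<zeta> \<noteq> 0" "\<zeta> \<noteq> z"
  shows "p * (\<zeta> * (Rz * cR - phz * cph) / (\<zeta> - z)) * dw * w / (\<i> * \<zeta>)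
    = dz * (p * (\<zeta> * (Rz * cR - phz * cph) / (\<zeta> - z)) * w / (\<i> * \<zeta>))
      + (- \<i> * Rz) * ((dz - dw) / (z - \<zeta>) * p * cR * w)
      + (\<i> * phz) * ((dz - dw) / (z - \<zeta>) * p * cph * w)"
proof -
  have "z - \<zeta> = - (\<zeta> - z)" by simp
  then show ?thesis using p3_core[OF assms(1), of "\<zeta> - z"] assms by simp
qed

locale opuc =
  fixes w :: "complex \<Rightarrow> complex" and \<phi> :: "nat \<Rightarrow> complex poly"
  assumes w_cont: "continuous_on (sphere 0 1) w"
    and w_real: "\<And>\<zeta>. \<zeta> \<in> sphere 0 1 \<Longrightarrow> cnj (w \<zeta>) = w \<zeta>"
    and phi_deg: "\<And>k. degree (\<phi> k) = k"
    and phi_lead: "\<And>k. lead_coeff (\<phi> k) \<in> \<real> \<and> Re (lead_coeff (\<phi> k)) > 0"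
    and phi_orth: "\<And>j k. contour_integral (circlepath 0 1)
        (\<lambda>\<zeta>. poly (\<phi> j) \<zeta> * cnj (poly (\<phi> k) \<zeta>) * w \<zeta> / (\<i> * \<zeta>))
        = (if j = k then 1 else 0)"
begin

definition ip :: "complex poly \<Rightarrow> complex poly \<Rightarrow> complex" where
  "ip p q = contour_integral (circlepath 0 1) (\<lambda>\<zeta>. poly p \<zeta> * cnj (poly q \<zeta>) * w \<zeta> / (\<i> * \<zeta>))"

definition kap :: "nat \<Rightarrow> complex" where "kap k = lead_coeff (\<phi> k)"

lemma kap_cnj: "cnj (kap k) = kap k"
  using phi_lead[of k] unfolding kap_def by (simp add: Reals_cnj_iff)

lemma kap_nz: "kap k \<noteq> 0"
  using phi_lead[of k] unfolding kap_def by auto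

lemma coeff_phi_top: "coeff (\<phi> k) k = kap k"
  using phi_deg[of k] unfolding kap_def by simp

lemma coeff_phi_high: "k < j \<Longrightarrow> coeff (\<phi> k) j = 0"
  using phi_deg[of k] by (simp add: coeff_eq_0)

lemma ip_phi: "ip (\<phi> j) (\<phi> k) = (if j = k then 1 else 0)"
  unfolding ip_def by (rule phi_orth)

lemma int_cont:
  assumes "continuous_on (sphere 0 1) F"
  shows "(\<lambda>\<zeta>. F \<zeta> * w \<zeta> / (\<i> * \<zeta>)) contour_integrable_on (circlepath 0 1)"
proof (rule contour_integrable_continuous_circlepath)
  have "continuous_on (sphere 0 1) (\<lambda>\<zeta>::complex. \<i> * \<zeta>)" by (intro continuous_intros)
  moreover have "\<forall>\<zeta>\<in>sphere (0::complex) 1. \<i> * \<zeta> \<noteq> 0" by auto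
  ultimately show "continuous_on (path_image (circlepath 0 1)) (\<lambda>\<zeta>. F \<zeta> * w \<zeta> / (\<i> * \<zeta>))"
    using assms w_cont by (auto intro!: continuous_intros)
qed

lemma ip_int: "(\<lambda>\<zeta>. poly p \<zeta> * cnj (poly q \<zeta>) * w \<zeta> / (\<i> * \<zeta>)) contour_integrable_on (circlepath 0 1)"
  by (rule int_cont) (intro continuous_intros)

lemma conj_int:
  "contour_integral (circlepath 0 1) (\<lambda>\<zeta>. cnj (F \<zeta>) * w \<zeta> / (\<i> * \<zeta>))
   = cnj (contour_integral (circlepath 0 1) (\<lambda>\<zeta>. F \<zeta> * w \<zeta> / (\<i> * \<zeta>)))"
proof -
  have on: "circlepath 0 1 t \<in> sphere 0 1" for t
    by (simp add: circlepath norm_mult)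
  show ?thesis
    unfolding circ_param integral_cnj
    by (intro integral_cong) (simp add: w_real[OF on])
qed

lemma ip_conj: "ip q p = cnj (ip p q)"
  unfolding ip_def
  using conj_int[of "\<lambda>\<zeta>. poly p \<zeta> * cnj (poly q \<zeta>)"] by (simp add: mult.commute)

lemma ip_add_l: "ip (p + q) r = ip p r + ip q r"
  unfolding ip_def
  by (subst contour_integral_add[OF ip_int ip_int, symmetric]) (simp add: algebra_simps add_divide_distrib)

lemma ip_diff_l: "ip (p - q) r = ip p r - ip q r"
  unfolding ip_def
  by (subst contour_integral_diff[OF ip_int ip_int, symmetric]) (simp add: algebra_simps diff_divide_distrib)

lemma ip_smult_l: "ip (smult c p) r = c * ip p r"
  unfolding ip_def
  by (subst contour_integral_lmul[OF ip_int, symmetric]) (simp add: algebra_simps)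

lemma ip_zero_l: "ip 0 r = 0"
  unfolding ip_def by simp

lemma ip_zero_r: "ip r 0 = 0"
  unfolding ip_def by simp

lemma ip_add_r: "ip r (p + q) = ip r p + ip r q"
  using ip_add_l[of p q r] by (metis complex_cnj_add ip_conj)

lemma ip_smult_r: "ip r (smult c p) = cnj c * ip r p"
  using ip_smult_l[of c p r] by (metis complex_cnj_mult ip_conj)

lemma ip_diff_r: "ip r (p - q) = ip r p - ip r q"
  using ip_diff_l[of p q r] by (metis complex_cnj_diff ip_conj)

lemma ip_sum_l: "finite A \<Longrightarrow> ip (\<Sum>k\<in>A. f k) r = (\<Sum>k\<in>A. ip (f k) r)"
  by (induction A rule: finite_induct) (auto simp: ip_zero_l ip_add_l)

lemma ip_sum_r: "finite A \<Longrightarrow> ip r (\<Sum>k\<in>A. f k) = (\<Sum>k\<in>A. ip r (f k))"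
  by (induction A rule: finite_induct) (auto simp: ip_zero_r ip_add_r)

lemma ip_shift: "ip (pCons 0 p) (pCons 0 q) = ip p q"
  unfolding ip_def
proof (rule contour_integral_eq)
  fix x assume "x \<in> path_image (circlepath 0 1)"
  then have "norm x = 1" by simp
  then have "cnj x = inverse x" by (rule circ_inv)
  moreover have "x \<noteq> 0" using \<open>norm x = 1\<close> by auto
  ultimately show "poly (pCons 0 p) x * cnj (poly (pCons 0 q) x) * w x / (\<i> * x) =
             poly p x * cnj (poly q x) * w x / (\<i> * x)"
    by (simp add: field_simps)
qed

lemma span:
  "degree p \<le> m \<Longrightarrow> \<exists>a. p = (\<Sum>k\<le>m. smult (a k) (\<phi> k))"
proof (induction m arbitrary: p)
  case 0
  then have "degree p = 0" by simp
  then obtain c where p: "p = [:c:]" by (rule degree_eq_zeroE)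
  obtain d where d: "\<phi> 0 = [:d:]" using phi_deg[of 0] by (rule degree_eq_zeroE)
  have "\<phi> 0 = [:kap 0:]"
    using coeff_phi_top[of 0] d by simp
  then show ?case using p kap_nz[of 0]
    by (intro exI[of _ "\<lambda>_. c / kap 0"]) simp
next
  case (Suc m)
  define c where "c = coeff p (Suc m) / kap (Suc m)"
  define q where "q = p - smult c (\<phi> (Suc m))"
  have "degree q \<le> m"
  proof (rule degree_le, intro allI impI)
    fix i assume "m < i"
    show "coeff q i = 0"
    proof (cases "i = Suc m")
      case True
      then show ?thesis using kap_nz[of "Suc m"]
        by (simp add: q_def c_def coeff_phi_top)
    next
      case False
      then have "Suc m < i" using \<open>m < i\<close> by simp
      then show ?thesis using Suc.prems
        by (simp add: q_def coeff_phi_high coeff_eq_0)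
    qed
  qed
  from Suc.IH[OF this] obtain b where b: "q = (\<Sum>k\<le>m. smult (b k) (\<phi> k))" by blast
  have "p = q + smult c (\<phi> (Suc m))" by (simp add: q_def)
  also have "\<dots> = (\<Sum>k\<le>Suc m. smult ((b(Suc m := c)) k) (\<phi> k))"
    by (simp add: b)
  finally show ?case by blast
qed

lemma ip_sum_phi:
  "ip (\<Sum>k\<le>m. smult (a k) (\<phi> k)) (\<phi> j) = (if j \<le> m then a j else 0)"
proof -
  have "ip (\<Sum>k\<le>m. smult (a k) (\<phi> k)) (\<phi> j) = (\<Sum>k\<le>m. a k * (if k = j then 1 else 0))"
    by (simp add: ip_sum_l ip_smult_l ip_phi)
  also have "\<dots> = (\<Sum>k\<le>m. if k = j then a k else 0)"
    by (intro sum.cong) auto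
  finally show ?thesis by (simp add: sum.delta')
qed

lemma ip_phi_sum:
  "ip (\<phi> j) (\<Sum>k\<le>m. smult (a k) (\<phi> k)) = (if j \<le> m then cnj (a j) else 0)"
  using ip_sum_phi[of a m j] by (subst ip_conj) (auto)

lemma orth_low: assumes "degree p < n" shows "ip (\<phi> n) p = 0"
proof -
  have "degree p \<le> n - 1" using assms by simp
  then obtain a where "p = (\<Sum>k\<le>n - 1. smult (a k) (\<phi> k))" using span[of p "n - 1"] by auto
  then show ?thesis using assms by (simp add: ip_phi_sum)
qed

lemma orth_low': assumes "degree p < n" shows "ip p (\<phi> n) = 0"
  using orth_low[OF assms] by (subst ip_conj) simp

lemma coeff_sum_phi:
  "coeff (\<Sum>k\<le>m. smult (a k) (\<phi> k)) m = a m * kap m"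
proof -
  have "coeff (\<Sum>k\<le>m. smult (a k) (\<phi> k)) m = (\<Sum>k\<le>m. a k * coeff (\<phi> k) m)"
    by (simp add: coeff_sum)
  also have "\<dots> = (\<Sum>k\<le>m. if k = m then a m * kap m else 0)"
    by (intro sum.cong) (auto simp: coeff_phi_top coeff_phi_high)
  finally show ?thesis by simp
qed

lemma ip_top: assumes "degree p \<le> n" shows "ip (\<phi> n) p = cnj (coeff p n) / kap n"
proof -
  obtain a where a: "p = (\<Sum>k\<le>n. smult (a k) (\<phi> k))" using span[OF assms] by auto
  show ?thesis
    by (subst (1 2) a) (simp add: ip_phi_sum coeff_sum_phi kap_cnj kap_nz)
qed

definition Qz :: "complex \<Rightarrow> nat \<Rightarrow> complex poly" where
  "Qz z n = (\<Sum>k<n. smult (cnj (poly (\<phi> k) z)) (\<phi> k))"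

lemma reproducing: assumes "degree p < n" shows "ip p (Qz z n) = poly p z"
proof -
  obtain m where n: "n = Suc m" using assms by (cases n) auto
  obtain a where a: "p = (\<Sum>k\<le>m. smult (a k) (\<phi> k))" using span[of p m] assms n by auto
  have "ip p (Qz z n) = (\<Sum>k\<le>m. poly (\<phi> k) z * ip p (\<phi> k))"
    unfolding Qz_def n lessThan_Suc_atMost by (simp add: ip_sum_r ip_smult_r)
  also have "\<dots> = (\<Sum>k\<le>m. poly (\<phi> k) z * a k)"
    by (intro sum.cong refl) (simp add: a ip_sum_phi)
  also have "\<dots> = poly p z" by (simp add: a poly_sum mult.commute)
  finally show ?thesis .
qed

definition R :: "nat \<Rightarrow> complex poly" where "R n = recip_poly n (\<phi> n)"

lemma ip_R_R: "ip (R n) (R n) = 1"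
proof -
  have "ip (R n) (R n) = ip (\<phi> n) (\<phi> n)"
    unfolding ip_def
  proof (rule contour_integral_eq)
    fix x assume "x \<in> path_image (circlepath 0 1)"
    then have x: "norm x = 1" by simp
    then have "x ^ n * cnj x ^ n = 1" by (metis circ_mult_cnj power_mult_distrib power_one)
    then have "x ^ n * cnj (poly (\<phi> n) x) * cnj (x ^ n * cnj (poly (\<phi> n) x)) = poly (\<phi> n) x * cnj (poly (\<phi> n) x)"
      by (simp add: algebra_simps)
    then show "poly (R n) x * cnj (poly (R n) x) * w x / (\<i> * x) =
          poly (\<phi> n) x * cnj (poly (\<phi> n) x) * w x / (\<i> * x)"
      unfolding R_def using poly_recip_circ[OF _ x, of "\<phi> n" n] phi_deg[of n] by simp
  qed
  then show ?thesis by (simp add: ip_phi)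
qed

lemma R_orth: assumes "degree s < n" shows "ip (R n) (pCons 0 s) = 0"
proof -
  have ds: "degree s \<le> n - 1" using assms by simp
  have "ip (R n) (pCons 0 s) = contour_integral (circlepath 0 1)
     (\<lambda>\<zeta>. cnj (poly (\<phi> n) \<zeta> * cnj (poly (recip_poly (n - 1) s) \<zeta>)) * w \<zeta> / (\<i> * \<zeta>))"
    unfolding ip_def
  proof (rule contour_integral_eq)
    fix x assume "x \<in> path_image (circlepath 0 1)"
    then have x: "norm x = 1" by simp
    have "x ^ n = x ^ (n - 1) * x" using assms by (cases n) auto
    then have xn: "x ^ n * cnj x = x ^ (n - 1)" using circ_mult_cnj[OF x] by (simp add: algebra_simps)
    have "poly (R n) x * cnj (poly (pCons 0 s) x) = cnj (poly (\<phi> n) x) * (x ^ n * cnj x) * cnj (poly s x)"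
      unfolding R_def using poly_recip_circ[OF _ x, of "\<phi> n" n] phi_deg[of n] by simp
    also have "\<dots> = cnj (poly (\<phi> n) x * cnj (poly (recip_poly (n - 1) s) x))"
      unfolding xn using poly_recip_circ[OF ds x] by simp
    finally show "poly (R n) x * cnj (poly (pCons 0 s) x) * w x / (\<i> * x) =
       cnj (poly (\<phi> n) x * cnj (poly (recip_poly (n - 1) s) x)) * w x / (\<i> * x)" by simp
  qed
  also have "\<dots> = cnj (ip (\<phi> n) (recip_poly (n - 1) s))"
    unfolding ip_def by (rule conj_int)
  also have "ip (\<phi> n) (recip_poly (n - 1) s) = 0"
    using degree_recip[of "n - 1" s] assms by (intro orth_low) simp
  finally show ?thesis by simp
qed

lemma degree_pCons0: "degree (pCons 0 s) \<le> Suc (degree s)"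
  by (cases "s = 0") auto

lemma uniq:
  assumes "degree f \<le> n" "\<And>s. degree s < n \<Longrightarrow> ip f (pCons 0 s) = 0"
  shows "\<exists>c. f = smult c (R n)"
proof -
  define c where "c = poly f 0 / cnj (kap n)"
  define g where "g = f - smult c (R n)"
  have R0: "poly (R n) 0 = cnj (kap n)"
    unfolding R_def poly_recip_0 by (simp add: coeff_phi_top)
  have g0: "coeff g 0 = 0"
    using kap_nz[of n] by (simp add: g_def c_def poly_0_coeff_0[symmetric] R0)
  have dg: "degree g \<le> n"
    unfolding g_def using assms(1) degree_recip[of n "\<phi> n"] R_def
    by (metis degree_diff_le degree_smult_le order_trans)
  obtain a0 s where gs: "g = pCons a0 s" by (rule pCons_cases)
  with g0 have gs: "g = pCons 0 s" by simp
  have "s = 0"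
  proof (cases n)
    case 0
    then show ?thesis using dg gs by (cases "s = 0") auto
  next
    case (Suc m)
    have ds: "degree s \<le> m" using dg gs Suc by (cases "s = 0") auto
    obtain a where a: "s = (\<Sum>k\<le>m. smult (a k) (\<phi> k))" using span[OF ds] by auto
    have "a j = 0" if "j \<le> m" for j
    proof -
      have dj: "degree (\<phi> j) < n" using that Suc phi_deg[of j] by simp
      have "a j = ip s (\<phi> j)" by (simp add: a ip_sum_phi that)
      also have "\<dots> = ip g (pCons 0 (\<phi> j))" by (simp add: gs ip_shift)
      also have "\<dots> = ip f (pCons 0 (\<phi> j)) - c * ip (R n) (pCons 0 (\<phi> j))"
        by (simp add: g_def ip_diff_l ip_smult_l)
      also have "\<dots> = 0" using assms(2)[OF dj] R_orth[OF dj] by simp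
      finally show ?thesis .
    qed
    then show ?thesis by (simp add: a)
  qed
  then have "g = 0" using gs by simp
  then show ?thesis unfolding g_def by auto
qed

lemma szego:
  "\<exists>b. \<phi> (Suc n) = smult (kap (Suc n) / kap n) (pCons 0 (\<phi> n)) + smult b (R n)"
proof -
  define a where "a = kap (Suc n) / kap n"
  define f where "f = \<phi> (Suc n) - smult a (pCons 0 (\<phi> n))"
  have df: "degree f \<le> n"
  proof (rule degree_le, intro allI impI)
    fix i assume "n < i"
    show "coeff f i = 0"
    proof (cases "i = Suc n")
      case True
      then show ?thesis using kap_nz[of n]
        by (simp add: f_def a_def coeff_phi_top)
    next
      case False
      then have "Suc n < i" using \<open>n < i\<close> by simp
      then show ?thesis
        by (cases i) (simp_all add: f_def coeff_phi_high)
    qed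
  qed
  have "ip f (pCons 0 s) = 0" if "degree s < n" for s
  proof -
    have "degree (pCons 0 s) < Suc n" using degree_pCons0[of s] that by simp
    then have "ip (\<phi> (Suc n)) (pCons 0 s) = 0" by (rule orth_low)
    moreover have "ip (pCons 0 (\<phi> n)) (pCons 0 s) = 0" using that by (simp add: ip_shift orth_low)
    ultimately show ?thesis by (simp add: f_def ip_diff_l ip_smult_l del: smult_pCons)
  qed
  from uniq[OF df this] obtain b where "f = smult b (R n)" by blast
  then show ?thesis unfolding f_def a_def by (metis diff_add_cancel add.commute)
qed

lemma szego_norm:
  assumes sz: "\<phi> (Suc n) = smult a (pCons 0 (\<phi> n)) + smult b (R n)"
  shows "a * cnj a - b * cnj b = 1"
proof -
  define t where "t = ip (pCons 0 (\<phi> n)) (R n)"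
  have AA: "ip (pCons 0 (\<phi> n)) (pCons 0 (\<phi> n)) = 1" by (simp add: ip_shift ip_phi)
  have BA: "ip (R n) (pCons 0 (\<phi> n)) = cnj t" unfolding t_def by (rule ip_conj)
  have dR: "degree (R n) < Suc n" using degree_recip[of n] R_def by (simp add: le_imp_less_Suc)
  have "0 = ip (\<phi> (Suc n)) (R n)" using orth_low[OF dR] by simp
  also have "\<dots> = a * t + b" by (simp add: sz ip_add_l ip_smult_l ip_R_R t_def del: smult_pCons)
  finally have b: "a * t = - b" by (simp add: eq_neg_iff_add_eq_0)
  then have cb: "cnj a * cnj t = - cnj b" by (metis complex_cnj_minus complex_cnj_mult)
  have "1 = ip (\<phi> (Suc n)) (\<phi> (Suc n))" by (simp add: ip_phi)
  also have "\<dots> = a * cnj a + a * cnj b * t + b * cnj a * cnj t + b * cnj b"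
    by (simp add: sz ip_add_l ip_add_r ip_smult_l ip_smult_r AA BA ip_R_R t_def algebra_simps del: smult_pCons)
  also have "a * cnj b * t = - b * cnj b"
  proof -
    have "a * cnj b * t = (a * t) * cnj b" by (simp only: mult_ac)
    then show ?thesis using b by simp
  qed
  also have "b * cnj a * cnj t = - b * cnj b"
  proof -
    have "b * cnj a * cnj t = b * (cnj a * cnj t)" by (simp only: mult_ac)
    then show ?thesis using cb by simp
  qed
  finally show ?thesis by simp
qed

lemma CD:
  "(1 - cnj z * \<zeta>) * poly (Qz z n) \<zeta> =
     cnj (poly (R n) z) * poly (R n) \<zeta> - cnj (poly (\<phi> n) z) * poly (\<phi> n) \<zeta>"
proof (induction n)
  case 0
  obtain d where d: "\<phi> 0 = [:d:]" using phi_deg[of 0] by (rule degree_eq_zeroE)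
  have "d = kap 0" using coeff_phi_top[of 0] d by simp
  then have "cnj d = d" using kap_cnj by simp
  then have "R 0 = [:d:]" unfolding R_def d by (simp add: recip_poly_def monom_0)
  then show ?case by (simp add: Qz_def d)
next
  case (Suc n)
  obtain b where sz: "\<phi> (Suc n) = smult (kap (Suc n) / kap n) (pCons 0 (\<phi> n)) + smult b (R n)"
    using szego by blast
  define a where "a = kap (Suc n) / kap n"
  have nrm: "a * cnj a - b * cnj b = 1" using szego_norm sz a_def by blast
  have RS: "R (Suc n) = smult (cnj a) (R n) + smult (cnj b) (pCons 0 (\<phi> n))"
    unfolding R_def sz a_def[symmetric]
    by (simp add: recip_add recip_smult recip_shift recip_recip phi_deg)
  have "(1 - cnj z * \<zeta>) * poly (Qz z (Suc n)) \<zeta> =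
       (1 - cnj z * \<zeta>) * poly (Qz z n) \<zeta> + (1 - cnj z * \<zeta>) * (cnj (poly (\<phi> n) z) * poly (\<phi> n) \<zeta>)"
    by (simp add: Qz_def algebra_simps)
  also have "\<dots> = cnj (poly (R n) z) * poly (R n) \<zeta> - cnj (z * poly (\<phi> n) z) * (\<zeta> * poly (\<phi> n) \<zeta>)"
    unfolding Suc.IH by (simp add: algebra_simps)
  also have "\<dots> = (a * cnj a - b * cnj b) * (cnj (poly (R n) z) * poly (R n) \<zeta> - cnj (z * poly (\<phi> n) z) * (\<zeta> * poly (\<phi> n) \<zeta>))"
    using nrm by simp
  also have "\<dots> = cnj (poly (R (Suc n)) z) * poly (R (Suc n)) \<zeta> - cnj (poly (\<phi> (Suc n)) z) * poly (\<phi> (Suc n)) \<zeta>"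
  proof -
    have e1: "poly (R (Suc n)) x = cnj a * poly (R n) x + cnj b * (x * poly (\<phi> n) x)" for x
      by (simp add: RS)
    have e2: "poly (\<phi> (Suc n)) x = a * (x * poly (\<phi> n) x) + b * poly (R n) x" for x
      by (simp add: sz a_def del: smult_pCons)
    show ?thesis unfolding e1 e2 by (rule cd_alg[symmetric])
  qed
  finally show ?case .
qed


lemma Dint:
  assumes VI: "\<And>m::int. (\<lambda>\<zeta>. D \<zeta> * \<zeta> powi m * w \<zeta> / (\<i> * \<zeta>)) contour_integrable_on circlepath 0 1"
  shows "(\<lambda>\<zeta>. D \<zeta> * poly p \<zeta> * cnj (poly q \<zeta>) * w \<zeta>) contour_integrable_on circlepath 0 1"
proof -
  let ?G = "\<lambda>\<zeta>. \<Sum>j\<le>degree p. \<Sum>k\<le>degree q. (\<i> * coeff p j * cnj (coeff q k)) *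
              (D \<zeta> * \<zeta> powi (int j - int k + 1) * w \<zeta> / (\<i> * \<zeta>))"
  have "?G contour_integrable_on circlepath 0 1"
    by (intro contour_integrable_sum finite_atMost contour_integrable_lmul VI)
  then show ?thesis
  proof (rule contour_integrable_eq)
    fix x assume "x \<in> path_image (circlepath 0 1)"
    then have x: "norm x = 1" by simp
    then have nz: "x \<noteq> 0" by auto
    have cx: "cnj x = inverse x" using x by (rule circ_inv)
    have pw: "x powi (int j - int k + 1) = x ^ j * inverse (x ^ k) * x" for j k
      using nz by (simp add: power_int_add power_int_diff divide_inverse)
    have "D x * poly p x * cnj (poly q x) * w x =
       (\<Sum>j\<le>degree p. \<Sum>k\<le>degree q. D x * (coeff p j * x ^ j) * (cnj (coeff q k) * cnj x ^ k) * w x)"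
      unfolding poly_altdef[of p] poly_altdef[of q]
      by (simp add: sum_product sum_distrib_left sum_distrib_right mult.assoc) (rule sum.swap)
    also have "\<dots> = ?G x"
    proof -
      have t: "D x * (coeff p j * x ^ j) * (cnj (coeff q k) * cnj x ^ k) * w x =
        (\<i> * coeff p j * cnj (coeff q k)) * (D x * x powi (int j - int k + 1) * w x / (\<i> * x))" for j k
        unfolding pw cx using nz by (simp add: power_inverse field_simps)
      show ?thesis by (simp only: t)
    qed
    finally show "?G x = D x * poly p x * cnj (poly q x) * w x" by simp
  qed
qed

end

lemma pderiv_map_cnj: "pderiv (map_poly cnj p) = map_poly cnj (pderiv p)"
  by (rule poly_eqI) (simp add: coeff_pderiv coeff_map_poly)

locale opuc2 = opuc w \<phi> for w \<phi> +
  fixes v :: "complex \<Rightarrow> complex" and S :: "complex set"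
  assumes S_open: "open S" and S_circ: "sphere 0 1 \<subseteq> S" and v_hol: "v holomorphic_on S"
    and w_v: "\<And>z. z \<in> S \<Longrightarrow> w z = exp (- v z)"
begin

lemma w_deriv:
  assumes "\<zeta> \<in> S" shows "(w has_field_derivative (- deriv v \<zeta> * w \<zeta>)) (at \<zeta>)"
proof -
  have "(v has_field_derivative deriv v \<zeta>) (at \<zeta>)" by (rule holomorphic_derivI[OF v_hol S_open assms])
  then have "((\<lambda>x. exp (- v x)) has_field_derivative exp (- v \<zeta>) * (- deriv v \<zeta>)) (at \<zeta>)"
    by (auto intro!: derivative_eq_intros)
  then have "((\<lambda>x. exp (- v x)) has_field_derivative (- deriv v \<zeta> * w \<zeta>)) (at \<zeta>)"
    using w_v[OF assms] by (simp add: mult.commute)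
  then show ?thesis
    by (rule has_field_derivative_transform_within_open[OF _ S_open assms]) (simp add: w_v)
qed

lemma dv_cont: "continuous_on (sphere 0 1) (deriv v)"
  using holomorphic_on_imp_continuous_on[OF holomorphic_deriv[OF v_hol S_open]] S_circ
  by (rule continuous_on_subset)

lemma main:
  assumes n: "n \<ge> 1" and z: "z \<in> S"
    and VI: "\<And>m::int. (\<lambda>\<zeta>. (deriv v z - deriv v \<zeta>) / (z - \<zeta>) * \<zeta> powi m * w \<zeta> / (\<i> * \<zeta>))
          contour_integrable_on circlepath 0 1"
  shows "poly (pderiv (\<phi> n)) z =
      of_nat n * (kap (n - 1) / kap n) * poly (\<phi> (n - 1)) z
    - \<i> * poly (R n) z *
        contour_integral (circlepath 0 1) (\<lambda>\<zeta>. (deriv v z - deriv v \<zeta>) / (z - \<zeta>)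
          * poly (\<phi> n) \<zeta> * cnj (poly (R n) \<zeta>) * w \<zeta>)
    + \<i> * poly (\<phi> n) z *
        contour_integral (circlepath 0 1) (\<lambda>\<zeta>. (deriv v z - deriv v \<zeta>) / (z - \<zeta>)
          * poly (\<phi> n) \<zeta> * cnj (poly (\<phi> n) \<zeta>) * w \<zeta>)"
proof -
  define D where "D = (\<lambda>\<zeta>. (deriv v z - deriv v \<zeta>) / (z - \<zeta>))"
  define Q where "Q = Qz z n"
  define Qb where "Qb = map_poly cnj Q"
  define E where "E = (\<lambda>\<zeta>. poly Qb (inverse \<zeta>))"
  define E' where "E' = (\<lambda>\<zeta>. poly (pderiv Qb) (inverse \<zeta>) * (- (inverse \<zeta> ^ Suc (Suc 0))))"
  define T where "T = - (pCons 0 (pCons 0 (pderiv Q)) + pCons 0 Q)"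
  define P1 where "P1 = (\<lambda>\<zeta>. poly (pderiv (\<phi> n)) \<zeta> * E \<zeta> * w \<zeta> / (\<i> * \<zeta>))"
  define P2 where "P2 = (\<lambda>\<zeta>. poly (\<phi> n) \<zeta> * (E' \<zeta> - E \<zeta> / \<zeta>) * w \<zeta> / (\<i> * \<zeta>))"
  define P3 where "P3 = (\<lambda>\<zeta>. poly (\<phi> n) \<zeta> * E \<zeta> * deriv v \<zeta> * w \<zeta> / (\<i> * \<zeta>))"
  define C where "C = circlepath (0::complex) 1"
  have pC: "path_image C = sphere 0 1" by (simp add: C_def)
  have E_circ: "E \<zeta> = cnj (poly Q \<zeta>)" if "\<zeta> \<in> sphere 0 1" for \<zeta>
  proof -
    have x: "norm \<zeta> = 1" using that by simp
    have "inverse \<zeta> = cnj \<zeta>" using circ_inv[OF x] by simp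
    then show ?thesis unfolding E_def Qb_def by (simp only: poly_cnj)
  qed
  have E'_circ: "E' \<zeta> - E \<zeta> / \<zeta> = cnj (poly T \<zeta>)" if "\<zeta> \<in> sphere 0 1" for \<zeta>
  proof -
    have x: "norm \<zeta> = 1" using that by simp
    then have nz: "\<zeta> \<noteq> 0" by auto
    have cx: "inverse \<zeta> = cnj \<zeta>" using circ_inv[OF x] by simp
    have e1: "E' \<zeta> = - (cnj (poly (pderiv Q) \<zeta>) * cnj \<zeta> ^ 2)"
      unfolding E'_def Qb_def pderiv_map_cnj cx poly_cnj[symmetric] by (simp add: power2_eq_square)
    have e2: "E \<zeta> / \<zeta> = cnj (poly Q \<zeta>) * cnj \<zeta>"
      unfolding E_circ[OF that] by (simp add: divide_inverse cx)
    show ?thesis unfolding e1 e2 T_def by (simp add: algebra_simps power2_eq_square)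
  qed
  have E_der: "(E has_field_derivative E' \<zeta>) (at \<zeta>)" if "\<zeta> \<noteq> 0" for \<zeta>
    unfolding E_def E'_def
    by (rule DERIV_chain2[OF poly_DERIV DERIV_inverse[OF that]])
  have F_der: "((\<lambda>\<zeta>. poly (\<phi> n) \<zeta> * E \<zeta> * w \<zeta> / (\<i> * \<zeta>)) has_field_derivative
        P1 \<zeta> + P2 \<zeta> - P3 \<zeta>) (at \<zeta> within (S - {0}))" if "\<zeta> \<in> S - {0}" for \<zeta>
  proof -
    have nz: "\<zeta> \<noteq> 0" and zS: "\<zeta> \<in> S" using that by auto
    have d1: "((\<lambda>\<zeta>. poly (\<phi> n) \<zeta> * E \<zeta>) has_field_derivative
          poly (pderiv (\<phi> n)) \<zeta> * E \<zeta> + E' \<zeta> * poly (\<phi> n) \<zeta>) (at \<zeta>)"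
      by (rule DERIV_mult[OF poly_DERIV E_der[OF nz]])
    have d2: "((\<lambda>\<zeta>. poly (\<phi> n) \<zeta> * E \<zeta> * w \<zeta>) has_field_derivative
          (poly (pderiv (\<phi> n)) \<zeta> * E \<zeta> + E' \<zeta> * poly (\<phi> n) \<zeta>) * w \<zeta> + (- deriv v \<zeta> * w \<zeta>) * (poly (\<phi> n) \<zeta> * E \<zeta>)) (at \<zeta>)"
      by (rule DERIV_mult[OF d1 w_deriv[OF zS]])
    have d3: "((\<lambda>\<zeta>. \<i> * \<zeta>) has_field_derivative \<i> * 1) (at \<zeta>)"
      by (rule DERIV_cmult[OF DERIV_ident])
    have "((\<lambda>\<zeta>. poly (\<phi> n) \<zeta> * E \<zeta> * w \<zeta> / (\<i> * \<zeta>)) has_field_derivative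
      (((poly (pderiv (\<phi> n)) \<zeta> * E \<zeta> + E' \<zeta> * poly (\<phi> n) \<zeta>) * w \<zeta> + (- deriv v \<zeta> * w \<zeta>) * (poly (\<phi> n) \<zeta> * E \<zeta>)) * (\<i> * \<zeta>)
        - poly (\<phi> n) \<zeta> * E \<zeta> * w \<zeta> * (\<i> * 1)) / ((\<i> * \<zeta>) * (\<i> * \<zeta>))) (at \<zeta>)"
      by (rule DERIV_divide[OF d2 d3]) (use nz in simp)
    moreover have "(((poly (pderiv (\<phi> n)) \<zeta> * E \<zeta> + E' \<zeta> * poly (\<phi> n) \<zeta>) * w \<zeta> + (- deriv v \<zeta> * w \<zeta>) * (poly (\<phi> n) \<zeta> * E \<zeta>)) * (\<i> * \<zeta>)
        - poly (\<phi> n) \<zeta> * E \<zeta> * w \<zeta> * (\<i> * 1)) / ((\<i> * \<zeta>) * (\<i> * \<zeta>)) = P1 \<zeta> + P2 \<zeta> - P3 \<zeta>"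
      unfolding P1_def P2_def P3_def by (rule fder_alg[OF nz])
    ultimately show ?thesis by (simp add: has_field_derivative_at_within)
  qed
  have P0: "((\<lambda>\<zeta>. P1 \<zeta> + P2 \<zeta> - P3 \<zeta>) has_contour_integral 0) C"
    by (rule Cauchy_theorem_primitive[OF F_der]) (use S_circ in \<open>auto simp: C_def\<close>)
  have i1: "P1 contour_integrable_on C"
    unfolding C_def by (rule contour_integrable_eq[OF ip_int[of "pderiv (\<phi> n)" Q]]) (simp add: P1_def E_circ)
  have i2: "P2 contour_integrable_on C"
    unfolding C_def by (rule contour_integrable_eq[OF ip_int[of "\<phi> n" T]]) (simp add: P2_def E'_circ)
  have i3: "P3 contour_integrable_on C"
  proof -
    have cF: "continuous_on (sphere 0 1) (\<lambda>\<zeta>. poly (\<phi> n) \<zeta> * cnj (poly Q \<zeta>) * deriv v \<zeta>)"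
      by (intro continuous_intros dv_cont)
    show ?thesis unfolding C_def
      by (rule contour_integrable_eq[OF int_cont[OF cF]]) (simp add: P3_def E_circ)
  qed
  have "contour_integral C (\<lambda>\<zeta>. P1 \<zeta> + P2 \<zeta> - P3 \<zeta>) = 0" using P0 by (rule contour_integral_unique)
  then have sum0: "contour_integral C P1 + contour_integral C P2 - contour_integral C P3 = 0"
    by (simp add: contour_integral_diff contour_integral_add contour_integrable_add i1 i2 i3)
  have dQ: "degree Q \<le> n - 1"
  proof (rule degree_le, intro allI impI)
    fix j assume "n - 1 < j"
    then show "coeff Q j = 0" unfolding Q_def Qz_def using n
      by (auto simp: coeff_sum coeff_phi_high intro!: sum.neutral)
  qed
  have cQ: "coeff Q (n - 1) = cnj (poly (\<phi> (n - 1)) z) * kap (n - 1)"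
  proof -
    have "coeff Q (n - 1) = (\<Sum>k<n. cnj (poly (\<phi> k) z) * coeff (\<phi> k) (n - 1))"
      unfolding Q_def Qz_def by (simp add: coeff_sum)
    also have "\<dots> = (\<Sum>k<n. if k = n - 1 then cnj (poly (\<phi> (n - 1)) z) * kap (n - 1) else 0)"
      by (intro sum.cong refl) (auto simp: coeff_phi_high coeff_phi_top)
    also have "\<dots> = cnj (poly (\<phi> (n - 1)) z) * kap (n - 1)" using n by (simp add: sum.delta')
    finally show ?thesis .
  qed
  obtain m where nm: "n = Suc m" using n by (cases n) auto
  have cT: "coeff T n = - (of_nat n * coeff Q (n - 1))"
  proof -
    have cp: "coeff (pCons 0 (pderiv Q)) m = of_nat m * coeff Q m"
      by (cases m) (simp_all add: coeff_pderiv)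
    have "coeff T (Suc m) = - (coeff (pCons 0 (pderiv Q)) m + coeff Q m)"
      unfolding T_def by (simp only: coeff_minus coeff_add coeff_pCons_Suc)
    then show ?thesis using cp nm by (simp add: algebra_simps)
  qed
  have dT: "degree T \<le> n"
  proof (rule degree_le, intro allI impI)
    fix j assume "n < j"
    then obtain i where j: "j = Suc (Suc i)" and "m \<le> i" using nm by (cases j; cases "j - 1") auto
    then have "coeff Q (Suc i) = 0" using dQ nm by (intro coeff_eq_0) simp
    then show "coeff T j = 0" unfolding T_def j by (simp add: coeff_pderiv)
  qed
  have I1: "contour_integral C P1 = poly (pderiv (\<phi> n)) z"
  proof -
    have "contour_integral C P1 = ip (pderiv (\<phi> n)) Q"
      unfolding ip_def C_def by (rule contour_integral_eq) (simp add: P1_def E_circ)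
    also have "\<dots> = poly (pderiv (\<phi> n)) z" unfolding Q_def
      by (rule reproducing) (use n in \<open>simp add: degree_pderiv phi_deg\<close>)
    finally show ?thesis .
  qed
  have I2: "contour_integral C P2 = cnj (coeff T n) / kap n"
  proof -
    have "contour_integral C P2 = ip (\<phi> n) T"
      unfolding ip_def C_def by (rule contour_integral_eq) (simp add: P2_def E'_circ)
    also have "\<dots> = cnj (coeff T n) / kap n" by (rule ip_top[OF dT])
    finally show ?thesis .
  qed
  define G0 where "G0 = (\<lambda>\<zeta>. poly (\<phi> n) \<zeta> * cnj (poly Q \<zeta>) * w \<zeta> / (\<i> * \<zeta>))"
  define G1 where "G1 = (\<lambda>\<zeta>. D \<zeta> * poly (\<phi> n) \<zeta> * cnj (poly (R n) \<zeta>) * w \<zeta>)"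
  define G2 where "G2 = (\<lambda>\<zeta>. D \<zeta> * poly (\<phi> n) \<zeta> * cnj (poly (\<phi> n) \<zeta>) * w \<zeta>)"
  have VI': "\<And>m::int. (\<lambda>\<zeta>. D \<zeta> * \<zeta> powi m * w \<zeta> / (\<i> * \<zeta>)) contour_integrable_on circlepath 0 1"
    unfolding D_def by (rule VI)
  have g0: "G0 contour_integrable_on C" unfolding G0_def C_def by (rule ip_int)
  have g1: "G1 contour_integrable_on C" unfolding G1_def C_def by (rule Dint[OF VI'])
  have g2: "G2 contour_integrable_on C" unfolding G2_def C_def by (rule Dint[OF VI'])
  have P3eq: "P3 \<zeta> = deriv v z * G0 \<zeta> + (- \<i> * poly (R n) z) * G1 \<zeta> + (\<i> * poly (\<phi> n) z) * G2 \<zeta>"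
    if "\<zeta> \<in> path_image C" for \<zeta>
  proof -
    have sp: "\<zeta> \<in> sphere 0 1" using that pC by simp
    then have x: "norm \<zeta> = 1" by simp
    then have nz: "\<zeta> \<noteq> 0" by auto
    have cx: "cnj \<zeta> = inverse \<zeta>" using x by (rule circ_inv)
    show ?thesis
    proof (cases "\<zeta> = z")
      case True
      then show ?thesis unfolding P3_def G0_def G1_def G2_def D_def E_circ[OF sp] by simp
    next
      case False
      have "cnj ((1 - cnj z * \<zeta>) * poly Q \<zeta>) = cnj (cnj (poly (R n) z) * poly (R n) \<zeta> - cnj (poly (\<phi> n) z) * poly (\<phi> n) \<zeta>)"
        unfolding Q_def by (simp only: CD)
      then have "(1 - z / \<zeta>) * cnj (poly Q \<zeta>) = poly (R n) z * cnj (poly (R n) \<zeta>) - poly (\<phi> n) z * cnj (poly (\<phi> n) \<zeta>)"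
        by (simp add: cx divide_inverse)
      then have cq: "cnj (poly Q \<zeta>) = \<zeta> * (poly (R n) z * cnj (poly (R n) \<zeta>) - poly (\<phi> n) z * cnj (poly (\<phi> n) \<zeta>)) / (\<zeta> - z)"
        using nz False by (simp add: field_simps)
      have zz: "z - \<zeta> \<noteq> 0" "\<zeta> - z \<noteq> 0" using False by auto
      show ?thesis unfolding P3_def G0_def G1_def G2_def D_def E_circ[OF sp] cq
        by (rule p3_alg[OF nz False])
    qed
  qed
  have I3: "contour_integral C P3 = - \<i> * poly (R n) z * contour_integral C G1 + \<i> * poly (\<phi> n) z * contour_integral C G2"
  proof -
    have "contour_integral C P3 = contour_integral C (\<lambda>\<zeta>. deriv v z * G0 \<zeta> + (- \<i> * poly (R n) z) * G1 \<zeta> + (\<i> * poly (\<phi> n) z) * G2 \<zeta>)"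
      by (rule contour_integral_eq) (rule P3eq)
    also have "\<dots> = deriv v z * contour_integral C G0 + (- \<i> * poly (R n) z) * contour_integral C G1 + (\<i> * poly (\<phi> n) z) * contour_integral C G2"
    proof -
      have a1: "(\<lambda>\<zeta>. deriv v z * G0 \<zeta>) contour_integrable_on C" by (rule contour_integrable_lmul[OF g0])
      have a2: "(\<lambda>\<zeta>. (- \<i> * poly (R n) z) * G1 \<zeta>) contour_integrable_on C" by (rule contour_integrable_lmul[OF g1])
      have a3: "(\<lambda>\<zeta>. (\<i> * poly (\<phi> n) z) * G2 \<zeta>) contour_integrable_on C" by (rule contour_integrable_lmul[OF g2])
      show ?thesis
        by (simp only: contour_integral_add[OF contour_integrable_add[OF a1 a2] a3] contour_integral_add[OF a1 a2]
          contour_integral_lmul[OF g0] contour_integral_lmul[OF g1] contour_integral_lmul[OF g2])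
    qed
    also have "contour_integral C G0 = 0"
    proof -
      have "contour_integral C G0 = ip (\<phi> n) Q" unfolding G0_def C_def ip_def ..
      also have "\<dots> = 0" by (rule orth_low) (use dQ n in simp)
      finally show ?thesis .
    qed
    finally show ?thesis by simp
  qed
  have "poly (pderiv (\<phi> n)) z = contour_integral C P3 - contour_integral C P2"
    using sum0 I1 by (simp add: algebra_simps)
  also have "\<dots> = of_nat n * (kap (n - 1) / kap n) * poly (\<phi> (n - 1)) z
     - \<i> * poly (R n) z * contour_integral C G1 + \<i> * poly (\<phi> n) z * contour_integral C G2"
    unfolding I3 I2 cT cQ by (simp add: kap_cnj)
  finally show ?thesis unfolding C_def G1_def G2_def D_def .
qed

end

theorem theorem2p1:
  fixes w v :: "complex \<Rightarrow> complex" and S :: "complex set"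
    and \<phi> :: "nat \<Rightarrow> complex poly" and n :: nat
  assumes S_open: "open S" and S_circ: "sphere 0 1 \<subseteq> S"
    and v_hol: "v holomorphic_on S"
    and w_v: "\<And>z. z \<in> S \<Longrightarrow> w z = exp (- v z)"
    and w_pos: "\<And>\<zeta>. \<zeta> \<in> sphere 0 1 \<Longrightarrow> w \<zeta> \<in> \<real> \<and> Re (w \<zeta>) > 0"
    and w_norm: "contour_integral (circlepath 0 1) (\<lambda>\<zeta>. w \<zeta> / (\<i> * \<zeta>)) = 1"
    and phi_deg: "\<And>k. degree (\<phi> k) = k"
    and phi_lead: "\<And>k. lead_coeff (\<phi> k) \<in> \<real> \<and> Re (lead_coeff (\<phi> k)) > 0"
    and phi_orth: "\<And>j k. contour_integral (circlepath 0 1)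
        (\<lambda>\<zeta>. poly (\<phi> j) \<zeta> * cnj (poly (\<phi> k) \<zeta>) * w \<zeta> / (\<i> * \<zeta>))
        = (if j = k then 1 else 0)"
    and moments: "\<And>m::int. (\<lambda>\<zeta>. \<zeta> powi m * w \<zeta> / (\<i> * \<zeta>))
        contour_integrable_on (circlepath 0 1)"
    and v_integrals: "\<And>(z::complex) (m::int). z \<in> S \<Longrightarrow>
        (\<lambda>\<zeta>. (deriv v z - deriv v \<zeta>) / (z - \<zeta>) * \<zeta> powi m * w \<zeta> / (\<i> * \<zeta>))
          contour_integrable_on (circlepath 0 1)"
    and n_pos: "n \<ge> 1"
  shows "\<forall>z\<in>S. poly (pderiv (\<phi> n)) z =
      of_nat n * (lead_coeff (\<phi> (n - 1)) / lead_coeff (\<phi> n)) * poly (\<phi> (n - 1)) z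
    - \<i> * poly (recip_poly n (\<phi> n)) z *
        contour_integral (circlepath 0 1) (\<lambda>\<zeta>. (deriv v z - deriv v \<zeta>) / (z - \<zeta>)
          * poly (\<phi> n) \<zeta> * cnj (poly (recip_poly n (\<phi> n)) \<zeta>) * w \<zeta>)
    + \<i> * poly (\<phi> n) z *
        contour_integral (circlepath 0 1) (\<lambda>\<zeta>. (deriv v z - deriv v \<zeta>) / (z - \<zeta>)
          * poly (\<phi> n) \<zeta> * cnj (poly (\<phi> n) \<zeta>) * w \<zeta>)"
proof -
  have wc: "continuous_on (sphere 0 1) w"
  proof -
    have "continuous_on S (\<lambda>z. exp (- v z))"
      using holomorphic_on_imp_continuous_on[OF v_hol] by (intro continuous_intros)
    then have "continuous_on S w" by (rule continuous_on_eq) (simp add: w_v)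
    then show ?thesis using S_circ by (rule continuous_on_subset)
  qed
  have wr: "\<And>\<zeta>. \<zeta> \<in> sphere 0 1 \<Longrightarrow> cnj (w \<zeta>) = w \<zeta>"
    using w_pos by (simp add: Reals_cnj_iff)
  interpret O: opuc2 w \<phi> v S
    by unfold_locales (use wc wr phi_deg phi_lead phi_orth S_open S_circ v_hol w_v in auto)
  show ?thesis
  proof
    fix z assume zS: "z \<in> S"
    from O.main[OF n_pos zS v_integrals[OF zS]]
    show "poly (pderiv (\<phi> n)) z =
      of_nat n * (lead_coeff (\<phi> (n - 1)) / lead_coeff (\<phi> n)) * poly (\<phi> (n - 1)) z
    - \<i> * poly (recip_poly n (\<phi> n)) z *
        contour_integral (circlepath 0 1) (\<lambda>\<zeta>. (deriv v z - deriv v \<zeta>) / (z - \<zeta>)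
          * poly (\<phi> n) \<zeta> * cnj (poly (recip_poly n (\<phi> n)) \<zeta>) * w \<zeta>)
    + \<i> * poly (\<phi> n) z *
        contour_integral (circlepath 0 1) (\<lambda>\<zeta>. (deriv v z - deriv v \<zeta>) / (z - \<zeta>)
          * poly (\<phi> n) \<zeta> * cnj (poly (\<phi> n) \<zeta>) * w \<zeta>)"
      unfolding O.kap_def O.R_def .
  qed
qed

end
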